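(* There exists a setting (with pairwise distinct budgets) in which the budget-oblivious second-price auction (BOSP) has no pure Nash equilibrium.
   Context: Setting: there are $k\ge 1$ slots with public click-through rates $\theta_1>\theta_2>\dots>\theta_k>0$, and $n\ge k$ players. Player $i$ has a private value per click $v_i\ge 0$ and a budget $B_i>0$; the budgets $B_1,\dots,B_n$ are pairwise distinct. A setting consists of $k,n,(\theta_j),(v_i),(B_i)$ together with a fixed strict priority order on the players used to break all ties. Each player $i$ submits a value-bid $b_i\ge 0$ and a budget-bid $g_i\ge 0$; a mechanism outputs an injective partial slot assignment (assigned player $i$ gets slot $s(i)\in\{1,\dots,k\}$) and a price per click $p(i)\ge0$ for each assigned player; unassigned players pay nothing. The utility of player $i$ is $u_i=0$ if $i$ is unassigned, $u_i=\theta_{s(i)}(v_i-p(i))$ if $i$ is assigned and $\theta_{s(i)}p(i)\le B_i$, and $u_i=-\infty$ if $i$ is assigned and $\theta_{s(i)}p(i)>B_i$. A (pure) Nash equilibrium is a profile $(b_i,g_i)_{i}$ such that no player $i$ can strictly increase $u_i$ by unilaterally replacing $(b_i,g_i)$ with any other pair. BOSP: order the players by decreasing value-bid (ties broken by the priority order); for $j\le k$ the $j$-th player in this order gets slot $j$ and pays per click the value-bid of the $(j+1)$-th player in the order (0 if there is none); the remaining players are unassigned. Budget-bids are ignored. *)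

theory Defs
  imports Complex_Main "HOL-Library.Extended_Real"
begin

text \<open>Players are 0,...,n-1; slots are 1,...,k with click-through rates th 1,...,th k.
  The strict priority order on players is given by an injective key prio on players:
  player j has priority over player i iff prio j < prio i.
  A bid profile consists of value-bids b and budget-bids g (functions on players).\<close>

definition valid_setting ::
  "nat \<Rightarrow> nat \<Rightarrow> (nat \<Rightarrow> real) \<Rightarrow> (nat \<Rightarrow> real) \<Rightarrow> (nat \<Rightarrow> real) \<Rightarrow> (nat \<Rightarrow> nat) \<Rightarrow> bool" where
  "valid_setting k n th v B prio \<longleftrightarrow>
     1 \<le> k \<and> k \<le> n \<and>
     (\<forall>j1 j2. 1 \<le> j1 \<and> j1 < j2 \<and> j2 \<le> k \<longrightarrow> th j1 > th j2) \<and> th k > 0 \<and>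
     (\<forall>i<n. v i \<ge> 0) \<and> (\<forall>i<n. B i > 0) \<and>
     inj_on B {0..<n} \<and> inj_on prio {0..<n}"

definition precedes :: "(nat \<Rightarrow> nat) \<Rightarrow> (nat \<Rightarrow> real) \<Rightarrow> nat \<Rightarrow> nat \<Rightarrow> bool" where
  "precedes prio b j i \<longleftrightarrow> b j > b i \<or> (b j = b i \<and> prio j < prio i)"

definition bosp_rank :: "nat \<Rightarrow> (nat \<Rightarrow> nat) \<Rightarrow> (nat \<Rightarrow> real) \<Rightarrow> nat \<Rightarrow> nat" where
  "bosp_rank n prio b i = card {j. j < n \<and> precedes prio b j i}"

definition bosp_price :: "nat \<Rightarrow> (nat \<Rightarrow> nat) \<Rightarrow> (nat \<Rightarrow> real) \<Rightarrow> nat \<Rightarrow> real" where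
  "bosp_price n prio b i =
     (if \<exists>j<n. bosp_rank n prio b j = bosp_rank n prio b i + 1
      then b (THE j. j < n \<and> bosp_rank n prio b j = bosp_rank n prio b i + 1)
      else 0)"

definition bosp_utility ::
  "nat \<Rightarrow> nat \<Rightarrow> (nat \<Rightarrow> real) \<Rightarrow> (nat \<Rightarrow> real) \<Rightarrow> (nat \<Rightarrow> real) \<Rightarrow> (nat \<Rightarrow> nat)
   \<Rightarrow> (nat \<Rightarrow> real) \<Rightarrow> (nat \<Rightarrow> real) \<Rightarrow> nat \<Rightarrow> ereal" where
  "bosp_utility k n th v B prio b g i =
     (let r = bosp_rank n prio b i; p = bosp_price n prio b i in
      if r < k then
        (if th (r + 1) * p \<le> B i then ereal (th (r + 1) * (v i - p)) else -\<infinity>)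
      else 0)"

definition valid_profile :: "nat \<Rightarrow> (nat \<Rightarrow> real) \<Rightarrow> (nat \<Rightarrow> real) \<Rightarrow> bool" where
  "valid_profile n b g \<longleftrightarrow> (\<forall>i<n. b i \<ge> 0 \<and> g i \<ge> 0)"

definition bosp_nash ::
  "nat \<Rightarrow> nat \<Rightarrow> (nat \<Rightarrow> real) \<Rightarrow> (nat \<Rightarrow> real) \<Rightarrow> (nat \<Rightarrow> real) \<Rightarrow> (nat \<Rightarrow> nat)
   \<Rightarrow> (nat \<Rightarrow> real) \<Rightarrow> (nat \<Rightarrow> real) \<Rightarrow> bool" where
  "bosp_nash k n th v B prio b g \<longleftrightarrow>
     valid_profile n b g \<and>
     (\<forall>i<n. \<forall>b' g'. b' \<ge> 0 \<longrightarrow> g' \<ge> 0 \<longrightarrow>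
        bosp_utility k n th v B prio (b(i := b')) (g(i := g')) i
          \<le> bosp_utility k n th v B prio b g i)"

end

theory Submission
  imports Defs
begin

definition TH :: "nat \<Rightarrow> real" where "TH = (\<lambda>j. if j = 1 then 2 else 1)"
definition VV :: "nat \<Rightarrow> real" where "VV = (\<lambda>i. 100)"
definition BB :: "nat \<Rightarrow> real" where "BB = (\<lambda>i. 3 + real i)"

lemma prec_irr: "\<not> precedes id b i i"
  by (simp add: precedes_def)

lemma prec_asym: "precedes id b i j \<Longrightarrow> \<not> precedes id b j i"
  by (auto simp add: precedes_def)

lemma prec_trans: "precedes id b i j \<Longrightarrow> precedes id b j l \<Longrightarrow> precedes id b i l"
  by (auto simp add: precedes_def)

lemma prec_total: "i \<noteq> j \<Longrightarrow> precedes id b i j \<or> precedes id b j i"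
  by (auto simp add: precedes_def)

lemma order3:
  assumes d: "distinct [p0,p1,p2]" and l: "p0<3" "p1<3" "p2<3"
    and c1: "precedes id b p0 p1" and c2: "precedes id b p1 p2"
  shows "bosp_utility 2 3 TH VV BB id b g p0 = (if 2 * b p1 \<le> BB p0 then ereal (2*(100 - b p1)) else -\<infinity>)"
    and "bosp_utility 2 3 TH VV BB id b g p1 = (if b p2 \<le> BB p1 then ereal (100 - b p2) else -\<infinity>)"
    and "bosp_utility 2 3 TH VV BB id b g p2 = 0"
proof -
  have all: "\<And>j. j < 3 \<Longrightarrow> j = p0 \<or> j = p1 \<or> j = p2" using d l by auto
  have c3: "precedes id b p0 p2" using c1 c2 prec_trans by blast
  have S0: "{j. j < 3 \<and> precedes id b j p0} = {}"
    using all c1 c3 prec_asym prec_irr by blast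
  have S1: "{j. j < 3 \<and> precedes id b j p1} = {p0}"
    using all c1 c2 l prec_asym prec_irr by blast
  have S2: "{j. j < 3 \<and> precedes id b j p2} = {p0,p1}"
    using all c3 c2 l prec_asym prec_irr by blast
  have r0: "bosp_rank 3 id b p0 = 0" unfolding bosp_rank_def S0 by simp
  have r1: "bosp_rank 3 id b p1 = 1" unfolding bosp_rank_def S1 by simp
  have r2: "bosp_rank 3 id b p2 = 2" unfolding bosp_rank_def S2 using d by simp
  have rk: "\<And>j. j < 3 \<Longrightarrow> bosp_rank 3 id b j = (if j = p0 then 0 else if j = p1 then 1 else 2)"
    using all r0 r1 r2 d by auto
  have pr0: "bosp_price 3 id b p0 = b p1"
  proof -
    have "(THE j. j < 3 \<and> bosp_rank 3 id b j = bosp_rank 3 id b p0 + 1) = p1"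
      by (rule the_equality) (use l rk d in \<open>auto split: if_splits\<close>)
    then show ?thesis unfolding bosp_price_def using l r0 r1 by auto
  qed
  have pr1: "bosp_price 3 id b p1 = b p2"
  proof -
    have "(THE j. j < 3 \<and> bosp_rank 3 id b j = bosp_rank 3 id b p1 + 1) = p2"
      by (rule the_equality) (use l rk d in \<open>auto split: if_splits\<close>)
    then show ?thesis unfolding bosp_price_def using l r1 r2 by auto
  qed
  show "bosp_utility 2 3 TH VV BB id b g p0 = (if 2 * b p1 \<le> BB p0 then ereal (2*(100 - b p1)) else -\<infinity>)"
    unfolding bosp_utility_def Let_def r0 pr0 by (simp add: TH_def VV_def)
  show "bosp_utility 2 3 TH VV BB id b g p1 = (if b p2 \<le> BB p1 then ereal (100 - b p2) else -\<infinity>)"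
    unfolding bosp_utility_def Let_def r1 pr1 by (simp add: TH_def VV_def)
  show "bosp_utility 2 3 TH VV BB id b g p2 = 0"
    unfolding bosp_utility_def Let_def r2 by simp
qed

lemma chain3:
  "\<exists>p0 p1 p2. distinct [p0,p1,p2] \<and> p0<3 \<and> p1<3 \<and> p2<3 \<and> precedes id b p0 p1 \<and> precedes id b p1 p2"
proof -
  have t01: "precedes id b 0 1 \<or> precedes id b 1 0" and t02: "precedes id b 0 2 \<or> precedes id b 2 0"
    and t12: "precedes id b 1 2 \<or> precedes id b 2 1" using prec_total by auto
  show ?thesis
    using t01 t02 t12 prec_trans[of b 0 1 2] prec_trans[of b 1 2 0] prec_trans[of b 2 0 1]
      prec_trans[of b 0 2 1] prec_trans[of b 2 1 0] prec_trans[of b 1 0 2] prec_asym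
    by (metis distinct_length_2_or_more distinct_singleton less_numeral_extra(4)
        numeral_2_eq_2 numeral_3_eq_3 lessI less_SucI zero_less_Suc One_nat_def
        Suc_1 n_not_Suc_n nat.distinct(1))
qed

lemma prec_ge: "precedes id b j i \<Longrightarrow> b i \<le> b j"
  by (auto simp add: precedes_def)

lemma util_nonneg:
  assumes nn: "\<forall>j<3. b j \<ge> 0" and i: "i < 3" and z: "b i = 0"
  shows "bosp_utility 2 3 TH VV BB id b g i \<ge> 0"
proof -
  obtain q0 q1 q2 where q: "distinct [q0,q1,q2]" "q0<3" "q1<3" "q2<3"
    "precedes id b q0 q1" "precedes id b q1 q2"
    using chain3 by blast
  note u = order3[OF q, of g]
  have all: "i = q0 \<or> i = q1 \<or> i = q2" using q i by auto
  have g1: "b q1 \<le> b q0" "b q2 \<le> b q1" using q prec_ge by auto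
  have "BB j \<ge> 0" for j by (simp add: BB_def)
  then show ?thesis
    using all u nn q g1 z by (auto simp add: BB_def)
qed

theorem theorem1:
  shows "\<exists>k n th v B prio. valid_setting k n th v B prio \<and>
           \<not> (\<exists>b g. bosp_nash k n th v B prio b g)"
proof (intro exI conjI)
  show "valid_setting 2 3 TH VV BB id"
    unfolding valid_setting_def by (auto simp add: TH_def VV_def BB_def inj_on_def)
  show "\<not> (\<exists>b g. bosp_nash 2 3 TH VV BB id b g)"
  proof
    assume "\<exists>b g. bosp_nash 2 3 TH VV BB id b g"
    then obtain b g where ne: "bosp_nash 2 3 TH VV BB id b g" by blast
    have nn: "\<forall>j<3. b j \<ge> 0" using ne unfolding bosp_nash_def valid_profile_def by auto
    have dev: "\<And>i b'. i < 3 \<Longrightarrow> b' \<ge> 0 \<Longrightarrow>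
        bosp_utility 2 3 TH VV BB id (b(i := b')) (g(i := 0)) i \<le> bosp_utility 2 3 TH VV BB id b g i"
      using ne unfolding bosp_nash_def by auto
    have pos: "\<And>i. i < 3 \<Longrightarrow> bosp_utility 2 3 TH VV BB id b g i \<ge> 0"
    proof -
      fix i :: nat assume i: "i < 3"
      have "bosp_utility 2 3 TH VV BB id (b(i := 0)) (g(i := 0)) i \<ge> 0"
        by (rule util_nonneg) (use nn i in auto)
      then show "bosp_utility 2 3 TH VV BB id b g i \<ge> 0" using dev[OF i, of 0] by simp
    qed
    obtain p0 p1 p2 where q: "distinct [p0,p1,p2]" "p0<3" "p1<3" "p2<3"
      "precedes id b p0 p1" "precedes id b p1 p2"
      using chain3 by blast
    note u = order3[OF q, of g]
    have yx: "b p1 \<le> b p0" and wy: "b p2 \<le> b p1" using q prec_ge by auto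
    have B0: "2 * b p1 \<le> BB p0" using pos[OF q(2)] u(1) by (auto split: if_splits)
    have B0': "BB p0 \<le> 5" "BB p2 \<ge> 3" "BB p1 \<ge> 3" using q by (auto simp add: BB_def)
    show False
    proof (cases "b p1 < b p0")
      case True
      define b2 where "b2 = b(p2 := (b p0 + b p1)/2)"
      have q2: "distinct [p0,p2,p1]" "precedes id b2 p0 p2" "precedes id b2 p2 p1"
        using q True unfolding b2_def by (auto simp add: precedes_def)
      have e: "bosp_utility 2 3 TH VV BB id b2 (g(p2:=0)) p2 = (if b2 p1 \<le> BB p2 then ereal (100 - b2 p1) else -\<infinity>)"
        using order3(2)[OF q2(1) q(2) q(4) q(3) q2(2) q2(3)] by simp
      have b21: "b2 p1 = b p1" using q unfolding b2_def by auto
      have "(b p0 + b p1)/2 \<ge> 0" using nn q by auto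
      then have "bosp_utility 2 3 TH VV BB id b2 (g(p2:=0)) p2 \<le> 0"
        using dev[OF q(4), of "(b p0 + b p1)/2"] u(3) unfolding b2_def by simp
      then show False using e b21 B0 B0' by (auto split: if_splits)
    next
      case False
      then have eq: "b p1 = b p0" using yx by simp
      then have lt: "p0 < p1" using q(5) by (simp add: precedes_def)
      define b3 where "b3 = b(p2 := b p0 + 1)"
      have q3: "distinct [p2,p0,p1]" "precedes id b3 p2 p0" "precedes id b3 p0 p1"
        using q eq lt unfolding b3_def by (auto simp add: precedes_def)
      have e3: "bosp_utility 2 3 TH VV BB id b3 (g(p2:=0)) p2 = (if 2 * b3 p0 \<le> BB p2 then ereal (2*(100 - b3 p0)) else -\<infinity>)"
        using order3(1)[OF q3(1) q(4) q(2) q(3) q3(2) q3(3)] by simp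
      have b30: "b3 p0 = b p0" using q unfolding b3_def by auto
      have "b p0 + 1 \<ge> 0" using nn q by auto
      then have "bosp_utility 2 3 TH VV BB id b3 (g(p2:=0)) p2 \<le> 0"
        using dev[OF q(4), of "b p0 + 1"] u(3) unfolding b3_def by simp
      then have n2: "\<not> 2 * b p0 \<le> BB p2" using e3 b30 B0 B0' eq by (auto split: if_splits)
      define b4 where "b4 = b(p1 := b p0 + 1)"
      have q4: "distinct [p1,p0,p2]" "precedes id b4 p1 p0" "precedes id b4 p0 p2"
        using q eq lt wy unfolding b4_def by (auto simp add: precedes_def)
      have e4: "bosp_utility 2 3 TH VV BB id b4 (g(p1:=0)) p1 = (if 2 * b4 p0 \<le> BB p1 then ereal (2*(100 - b4 p0)) else -\<infinity>)"
        using order3(1)[OF q4(1) q(3) q(2) q(4) q4(2) q4(3)] by simp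
      have b40: "b4 p0 = b p0" using q unfolding b4_def by auto
      have "b p0 + 1 \<ge> 0" using nn q by auto
      then have d4: "bosp_utility 2 3 TH VV BB id b4 (g(p1:=0)) p1 \<le> bosp_utility 2 3 TH VV BB id b g p1"
        using dev[OF q(3), of "b p0 + 1"] unfolding b4_def by simp
      have w0: "b p2 \<ge> 0" using nn q by auto
      have "bosp_utility 2 3 TH VV BB id b g p1 \<le> 100" using u(2) w0 by auto
      then have d5: "bosp_utility 2 3 TH VV BB id b4 (g(p1:=0)) p1 \<le> 100" using d4 by (rule order.trans[rotated])
      have n1: "\<not> 2 * b p0 \<le> BB p1"
      proof
        assume h: "2 * b p0 \<le> BB p1"
        then have "ereal (2*(100 - b p0)) \<le> 100" using d5 e4 b40 by simp
        then show False using B0 B0' eq by simp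
      qed
      have "BB p1 < BB p0" "BB p2 < BB p0" using n1 n2 B0 eq by auto
      then have "p1 < p0" by (simp add: BB_def)
      then show False using lt by simp
    qed
  qed
qed

end
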